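(* Let $s>0$, $\mu\in\mathbb{R}$, $\tilde\varepsilon=s\varepsilon$, $\tilde\delta=s\delta$, and let $\varphi\in H^1_2((0,R))$, smooth on $(0,R)$, satisfy on $(0,R)$ $$-\partial_z\Big(\Big(\frac{4\tilde\varepsilon}{3}+\tilde\delta+\gamma P_0\Big)\frac{\partial_z\varphi}{z^2}\Big)+4\frac{\partial_zP_0}{z^3}\varphi=\frac{\mu\varrho_0}{z^2}\varphi.$$ Then there is $C>0$ such that $|\varphi(z)|\le Cz^3$ and $|\varphi'(z)|\le Cz^2$ for all $z$ near $0$.
   Context: Fix constants $\varepsilon>0$, $\delta>0$, $K>0$ and $6/5<\gamma<4/3$. Let $\varrho_0:[0,R]\to[0,\infty)$ be a Lane–Emden stationary density of radius $R>0$: $\varrho_0$ is smooth and positive on $[0,R)$, $\varrho_0(R)=0$, $P_0:=K\varrho_0^\gamma$ satisfies $\partial_z P_0(z)=-\frac{4\pi\varrho_0(z)}{z^2}\int_0^z\varrho_0(y)y^2\,dy$, and $\varrho_0(z)$ is comparable to $(R-z)^{1/(\gamma-1)}$ for $z$ near $R$. $H^1_2((0,R))$ is the completion of $\{u\in C^\infty([0,R]):u(0)=0\}$ in the norm $\|u\|^2=\int_0^R\frac{|u'|^2+|u|^2}{z^2}dz$. *)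

theory Defs
  imports "HOL-Analysis.Analysis"
begin

text \<open>f is C-infinity on S: all iterated derivatives exist on S (one-sided at boundary
points of S, since derivatives are taken within S).\<close>
definition smooth_on :: "real set \<Rightarrow> (real \<Rightarrow> real) \<Rightarrow> bool" where
  "smooth_on S f \<longleftrightarrow>
     (\<forall>n. \<forall>x\<in>S. (((deriv ^^ n) f) has_real_derivative ((deriv ^^ (Suc n)) f x)) (at x within S))"

definition H12_dist2 :: "real \<Rightarrow> (real \<Rightarrow> real) \<Rightarrow> (real \<Rightarrow> real) \<Rightarrow> real" where
  "H12_dist2 R u v = (LINT z:{0<..<R}|lborel.
      ((deriv u z - deriv v z)\<^sup>2 + (u z - v z)\<^sup>2) / z\<^sup>2)"

text \<open>Membership of a function (smooth on (0,R)) in H^1_2((0,R)), the completion of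
{u in C^infty([0,R]) : u(0) = 0} in the norm int_0^R (|u'|^2+|u|^2)/z^2 dz:
phi has finite norm and is a norm-limit of such smooth functions.\<close>
definition in_H12 :: "real \<Rightarrow> (real \<Rightarrow> real) \<Rightarrow> bool" where
  "in_H12 R \<phi> \<longleftrightarrow>
     set_integrable lborel {0<..<R} (\<lambda>z. ((deriv \<phi> z)\<^sup>2 + (\<phi> z)\<^sup>2) / z\<^sup>2) \<and>
     (\<exists>u :: nat \<Rightarrow> real \<Rightarrow> real.
        (\<forall>n. smooth_on {0..R} (u n) \<and> u n 0 = 0 \<and>
             set_integrable lborel {0<..<R}
               (\<lambda>z. ((deriv \<phi> z - deriv (u n) z)\<^sup>2 + (\<phi> z - u n z)\<^sup>2) / z\<^sup>2)) \<and>
        (\<lambda>n. H12_dist2 R \<phi> (u n)) \<longlonglongrightarrow> 0)"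

definition lane_emden :: "real \<Rightarrow> real \<Rightarrow> real \<Rightarrow> (real \<Rightarrow> real) \<Rightarrow> bool" where
  "lane_emden K \<gamma> R \<rho> \<longleftrightarrow>
     R > 0 \<and> smooth_on {0..<R} \<rho> \<and> (\<forall>z\<in>{0..<R}. \<rho> z > 0) \<and> \<rho> R = 0 \<and>
     (\<forall>z\<in>{0<..<R}. ((\<lambda>y. K * \<rho> y powr \<gamma>) has_real_derivative
         (- 4 * pi * \<rho> z / z\<^sup>2 * integral {0..z} (\<lambda>y. \<rho> y * y\<^sup>2))) (at z)) \<and>
     (\<exists>c1>0. \<exists>c2>0. \<exists>\<eta>>0. \<forall>z. R - \<eta> < z \<and> z < R \<longrightarrow>
         c1 * (R - z) powr (1 / (\<gamma> - 1)) \<le> \<rho> z \<and> \<rho> z \<le> c2 * (R - z) powr (1 / (\<gamma> - 1)))"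

end

theory Submission
  imports Defs
begin


lemma deriv_abs_bound:
  fixes f F f' F' :: "real \<Rightarrow> real"
  assumes ab: "a \<le> b"
    and df: "\<And>y. a \<le> y \<Longrightarrow> y \<le> b \<Longrightarrow> (f has_real_derivative f' y) (at y)"
    and dF: "\<And>y. a \<le> y \<Longrightarrow> y \<le> b \<Longrightarrow> (F has_real_derivative F' y) (at y)"
    and le: "\<And>y. a \<le> y \<Longrightarrow> y \<le> b \<Longrightarrow> \<bar>f' y\<bar> \<le> F' y"
  shows "\<bar>f b - f a\<bar> \<le> F b - F a"
proof -
  have c1: "continuous_on {a..b} (\<lambda>y. F y - f y)"
    by (rule DERIV_atLeastAtMost_imp_continuous_on) (use df dF in \<open>blast intro: DERIV_diff\<close>)
  have c2: "continuous_on {a..b} (\<lambda>y. F y + f y)"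
    by (rule DERIV_atLeastAtMost_imp_continuous_on) (use df dF in \<open>blast intro: DERIV_add\<close>)
  have "F a - f a \<le> F b - f b"
    apply (rule DERIV_nonneg_imp_increasing_open[OF ab _ c1])
    subgoal for x using DERIV_diff[OF dF df, of x] le[of x] by (intro exI[of _ "F' x - f' x"]) auto
    done
  moreover have "F a + f a \<le> F b + f b"
    apply (rule DERIV_nonneg_imp_increasing_open[OF ab _ c2])
    subgoal for x using DERIV_add[OF dF df, of x] le[of x] by (intro exI[of _ "F' x + f' x"]) auto
    done
  ultimately show ?thesis by linarith
qed

lemma amgm_aux:
  fixes a y t :: real
  assumes "y > 0" "t > 0"
  shows "\<bar>a\<bar> \<le> (a\<^sup>2 / y\<^sup>2) / (2*t) + t * y\<^sup>2 / 2"
proof -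
  have "0 \<le> (\<bar>a\<bar> - t*y\<^sup>2)\<^sup>2" by simp
  hence "2*t*y\<^sup>2*\<bar>a\<bar> \<le> a\<^sup>2 + (t * y\<^sup>2)\<^sup>2" by (simp add: power2_eq_square algebra_simps)
  hence "\<bar>a\<bar> \<le> (a\<^sup>2 + (t * y\<^sup>2)\<^sup>2) / (2*t*y\<^sup>2)" using assms by (simp add: field_simps)
  also have "\<dots> = (a\<^sup>2 / y\<^sup>2) / (2*t) + t * y\<^sup>2 / 2" using assms by (simp add: field_simps power2_eq_square)
  finally show ?thesis .
qed



lemma phi_bound1:
  fixes \<phi> :: "real \<Rightarrow> real" and R :: real
  assumes R: "R > 0"
  and dphi: "\<And>y. 0<y \<Longrightarrow> y<R \<Longrightarrow> (\<phi> has_real_derivative deriv \<phi> y) (at y)"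
  and cont: "continuous_on {0<..<R} (deriv \<phi>)"
  and int: "(\<lambda>y. ((deriv \<phi> y)\<^sup>2 + (\<phi> y)\<^sup>2)/y\<^sup>2) integrable_on {0<..<R}"
  shows "\<exists>B>0. \<forall>z. 0<z \<longrightarrow> z<R \<longrightarrow> \<bar>\<phi> z\<bar> \<le> B*z* sqrt z"
proof -
  define g where "g = (\<lambda>y. ((deriv \<phi> y)\<^sup>2 + (\<phi> y)\<^sup>2)/y\<^sup>2)"
  define I where "I = integral {0<..<R} g"
  have gnn: "\<forall>y\<in>{0<..<R}. 0 \<le> g y" unfolding g_def by auto
  have I0: "I \<ge> 0" unfolding I_def using int gnn g_def by (intro integral_nonneg) auto
  have contphi: "continuous_on {0<..<R} \<phi>"
    using dphi by (intro DERIV_continuous_on[where D="deriv \<phi>"]) (auto intro: has_field_derivative_at_within)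
  have gint: "g integrable_on {x..z}" if "0<x" "z<R" for x z
  proof -
    have sub: "{x..z} \<subseteq> {0<..<R}" using that by auto
    have "continuous_on {x..z} g" unfolding g_def
      using sub that by (intro continuous_intros continuous_on_subset[OF cont] continuous_on_subset[OF contphi]) auto
    thus ?thesis by (rule integrable_continuous_real)
  qed
  have gle: "integral {x..z} g \<le> I" if "0<x" "z<R" for x z
    unfolding I_def using that gnn int g_def by (intro integral_subset_le gint) auto
  have diff: "\<bar>\<phi> z - \<phi> x\<bar> \<le> (I+1)/2 * z * sqrt z" if xz: "0<x" "x\<le>z" "z<R" for x z
  proof -
    define t where "t = 1/(z* sqrt z)"
    have z0: "z > 0" using xz by auto
    have t0: "t > 0" unfolding t_def using z0 by auto
    have ftc: "(deriv \<phi> has_integral \<phi> z - \<phi> x) {x..z}"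
      using xz dphi
      by (intro fundamental_theorem_of_calculus)
         (auto simp: has_real_derivative_iff_has_vector_derivative[symmetric] intro: has_field_derivative_at_within)
    define h where "h = (\<lambda>y. g y / (2*t) + t*z\<^sup>2/2)"
    have hint: "(h has_integral (integral {x..z} g / (2*t) + (z-x)*(t*z\<^sup>2/2))) {x..z}"
      unfolding h_def
      apply (rule has_integral_add)
       apply (rule has_integral_divide)
       apply (rule integrable_integral[OF gint])
      using xz apply auto[2]
      using has_integral_const_real[of "t*z\<^sup>2/2" x z] xz by simp
    have "norm (integral {x..z} (deriv \<phi>)) \<le> integral {x..z} h"
    proof (rule integral_norm_bound_integral)
      show "deriv \<phi> integrable_on {x..z}" using ftc by blast
      show "h integrable_on {x..z}" using hint by blast
      fix y assume y: "y \<in> {x..z}"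
      hence y0: "y > 0" using xz by auto
      have "\<bar>deriv \<phi> y\<bar> \<le> ((deriv \<phi> y)\<^sup>2/y\<^sup>2)/(2*t) + t*y\<^sup>2/2" by (rule amgm_aux[OF y0 t0])
      also have "\<dots> \<le> g y/(2*t) + t*z\<^sup>2/2"
      proof -
        have "(deriv \<phi> y)\<^sup>2/y\<^sup>2 \<le> g y" unfolding g_def by (simp add: divide_right_mono)
        hence "((deriv \<phi> y)\<^sup>2/y\<^sup>2)/(2*t) \<le> g y/(2*t)" using t0 by (intro divide_right_mono) auto
        moreover have "t*y\<^sup>2/2 \<le> t*z\<^sup>2/2" using y y0 t0 by (auto intro!: power_mono)
        ultimately show ?thesis by linarith
      qed
      finally show "norm (deriv \<phi> y) \<le> h y" unfolding h_def by simp
    qed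
    hence "\<bar>\<phi> z - \<phi> x\<bar> \<le> integral {x..z} g / (2*t) + (z-x)*(t*z\<^sup>2/2)"
      using ftc hint by (simp add: integral_unique)
    also have "\<dots> \<le> I/(2*t) + z*(t*z\<^sup>2/2)"
      using gle[of x z] xz t0 z0 by (intro add_mono divide_right_mono mult_right_mono) auto
    also have "\<dots> = (I+1)/2 * z * sqrt z"
    proof -
      have s: "sqrt z * sqrt z = z" using z0 by simp
      have "sqrt z > 0" using z0 by simp
      thus ?thesis unfolding t_def using z0 s by (simp add: field_simps power2_eq_square) (simp add: mult.assoc[symmetric] s)
    qed
    finally show ?thesis .
  qed
  have small: "\<exists>x. 0<x \<and> x\<le>z \<and> \<bar>\<phi> x\<bar> \<le> e" if z: "0<z" "z<R" and e: "e>0" for z e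
  proof (rule ccontr)
    assume "\<not> ?thesis"
    hence big: "\<And>x. 0<x \<Longrightarrow> x\<le>z \<Longrightarrow> e < \<bar>\<phi> x\<bar>" by force
    define x0 where "x0 = 1/(I/e\<^sup>2 + 2/z)"
    have den: "I/e\<^sup>2 + 2/z > 0" using I0 e z by (auto intro: add_nonneg_pos)
    have x00: "x0 > 0" unfolding x0_def using den by simp
    have "x0 \<le> z/2"
    proof -
      have "2/z \<le> I/e\<^sup>2 + 2/z" using I0 e by simp
      moreover have "0 < (I/e\<^sup>2 + 2/z)*(2/z)" using den z by (intro mult_pos_pos) auto
      ultimately have "1/(I/e\<^sup>2 + 2/z) \<le> 1/(2/z)" using z by (intro divide_left_mono) auto
      thus ?thesis unfolding x0_def by simp
    qed
    hence x0z: "x0 < z" using z by simp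
    have ftc: "((\<lambda>y. e\<^sup>2/y\<^sup>2) has_integral ((-e\<^sup>2/z) - (-e\<^sup>2/x0))) {x0..z}"
    proof (rule fundamental_theorem_of_calculus)
      show "x0 \<le> z" using x0z by simp
      fix y assume "y \<in> {x0..z}"
      hence y0: "y > 0" using x00 by auto
      show "((\<lambda>y. -e\<^sup>2/y) has_vector_derivative e\<^sup>2/y\<^sup>2) (at y within {x0..z})"
        unfolding has_real_derivative_iff_has_vector_derivative[symmetric]
        using y0 by (auto intro!: derivative_eq_intros simp: power2_eq_square field_simps)
    qed
    have "integral {x0..z} (\<lambda>y. e\<^sup>2/y\<^sup>2) \<le> integral {x0..z} g"
    proof (rule integral_le)
      show "(\<lambda>y. e\<^sup>2/y\<^sup>2) integrable_on {x0..z}" using ftc by blast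
      show "g integrable_on {x0..z}" using gint x00 z by blast
      fix y assume y: "y \<in> {x0..z}"
      hence y0: "y>0" using x00 by auto
      have "e < \<bar>\<phi> y\<bar>" using big y y0 by auto
      hence "e\<^sup>2 \<le> (\<phi> y)\<^sup>2" using e by (metis abs_ge_zero less_imp_le power2_abs power_mono)
      hence "e\<^sup>2/y\<^sup>2 \<le> (\<phi> y)\<^sup>2/y\<^sup>2" by (simp add: divide_right_mono)
      also have "\<dots> \<le> g y" unfolding g_def by (simp add: divide_right_mono)
      finally show "e\<^sup>2/y\<^sup>2 \<le> g y" .
    qed
    also have "\<dots> \<le> I" using gle x00 z by blast
    finally have fin: "integral {x0..z} (\<lambda>y. e\<^sup>2/y\<^sup>2) \<le> I" .
    have "integral {x0..z} (\<lambda>y. e\<^sup>2/y\<^sup>2) = e\<^sup>2/x0 - e\<^sup>2/z" using integral_unique[OF ftc] by simp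
    with fin have "e\<^sup>2/x0 - e\<^sup>2/z \<le> I" by simp
    moreover have "e\<^sup>2/x0 = I + 2*e\<^sup>2/z" unfolding x0_def using e by (simp add: field_simps)
    moreover have "e\<^sup>2/z > 0" using e z by simp
    ultimately show False by linarith
  qed
  show ?thesis
  proof (intro exI[of _ "(I+1)/2"] conjI allI impI)
    show "(I+1)/2 > 0" using I0 by simp
    fix z assume z: "0<z" "z<R"
    show "\<bar>\<phi> z\<bar> \<le> (I+1)/2*z* sqrt z"
    proof (rule field_le_epsilon)
      fix e :: real assume "e > 0"
      then obtain x where x: "0<x" "x\<le>z" "\<bar>\<phi> x\<bar> \<le> e" using small z by blast
      have "\<bar>\<phi> z - \<phi> x\<bar> \<le> (I+1)/2 * z * sqrt z" using diff x z by blast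
      thus "\<bar>\<phi> z\<bar> \<le> (I+1)/2*z* sqrt z + e" using x by linarith
    qed
  qed
qed


lemma wderiv: "((\<lambda>y. (c + g * P y) * D y / y\<^sup>2) has_real_derivative deriv (\<lambda>y. (c + g * P y) * D y / y\<^sup>2) x) (at x)" 
  if "(P has_real_derivative P') (at x)" "(D has_real_derivative D') (at x)" "x \<noteq> 0" for x :: real
proof -
  have "\<exists>d. ((\<lambda>y. (c + g * P y) * D y / y\<^sup>2) has_real_derivative d) (at x)"
    apply (rule exI, rule DERIV_divide[OF DERIV_mult[OF DERIV_add[OF DERIV_const DERIV_cmult[OF that(1)]] that(2)] DERIV_pow])
    using that(3) by simp
  thus ?thesis using DERIV_imp_deriv by metis
qed


lemma smooth_open_deriv:
  assumes "smooth_on S f" "open S" "x \<in> S"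
  shows "(((deriv ^^ n) f) has_real_derivative ((deriv ^^ (Suc n)) f x)) (at x)"
  using assms unfolding smooth_on_def by (metis at_within_open)

theorem lemma2p6:
  fixes \<epsilon> \<delta> K \<gamma> R s \<mu> :: real and \<rho>0 \<phi> :: "real \<Rightarrow> real"
  assumes "\<epsilon> > 0" "\<delta> > 0" "K > 0" "6/5 < \<gamma>" "\<gamma> < 4/3"
    and "lane_emden K \<gamma> R \<rho>0"
    and "s > 0"
    and "in_H12 R \<phi>"
    and "smooth_on {0<..<R} \<phi>"
    and "\<forall>z\<in>{0<..<R}.
      - deriv (\<lambda>y. (4 * (s * \<epsilon>) / 3 + s * \<delta> + \<gamma> * (K * \<rho>0 y powr \<gamma>)) * deriv \<phi> y / y\<^sup>2) z
      + 4 * deriv (\<lambda>y. K * \<rho>0 y powr \<gamma>) z / z ^ 3 * \<phi> z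
      = \<mu> * \<rho>0 z / z\<^sup>2 * \<phi> z"
  shows "\<exists>C>0. \<exists>\<eta>>0. \<forall>z. 0 < z \<and> z < \<eta> \<and> z < R \<longrightarrow>
           \<bar>\<phi> z\<bar> \<le> C * z ^ 3 \<and> \<bar>deriv \<phi> z\<bar> \<le> C * z\<^sup>2"
proof -
  define P where "P = (\<lambda>y. K * \<rho>0 y powr \<gamma>)"
  define c0 where "c0 = 4 * (s * \<epsilon>) / 3 + s * \<delta>"
  define A where "A = (\<lambda>y. c0 + \<gamma> * P y)"
  define w where "w = (\<lambda>y. (c0 + \<gamma> * P y) * deriv \<phi> y / y\<^sup>2)"
  have c00: "c0 > 0" unfolding c0_def using assms(1,2,7) by (intro add_pos_pos) auto
  have Ap: "A y \<ge> c0" for y unfolding A_def P_def using assms by auto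
  have ode: "\<And>z. 0<z \<Longrightarrow> z<R \<Longrightarrow> - deriv w z + 4 * deriv P z / z^3 * \<phi> z = \<mu> * \<rho>0 z / z\<^sup>2 * \<phi> z"
    using assms(10) unfolding w_def P_def c0_def by auto
  from assms(6) have R0: "R > 0" and sm: "smooth_on {0..<R} \<rho>0" and pos: "\<forall>z\<in>{0..<R}. \<rho>0 z > 0"
    and dP0: "\<forall>z\<in>{0<..<R}. (P has_real_derivative
         (- 4 * pi * \<rho>0 z / z\<^sup>2 * integral {0..z} (\<lambda>y. \<rho>0 y * y\<^sup>2))) (at z)"
    unfolding lane_emden_def P_def by auto
  have dP: "(P has_real_derivative deriv P z) (at z)"
     and dPe: "deriv P z = - 4 * pi * \<rho>0 z / z\<^sup>2 * integral {0..z} (\<lambda>y. \<rho>0 y * y\<^sup>2)"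
    if "0<z" "z<R" for z
  proof -
    have h: "(P has_real_derivative (- 4 * pi * \<rho>0 z / z\<^sup>2 * integral {0..z} (\<lambda>y. \<rho>0 y * y\<^sup>2))) (at z)"
      using dP0 that by auto
    show "deriv P z = - 4 * pi * \<rho>0 z / z\<^sup>2 * integral {0..z} (\<lambda>y. \<rho>0 y * y\<^sup>2)" by (rule DERIV_imp_deriv[OF h])
    thus "(P has_real_derivative deriv P z) (at z)" using h by simp
  qed
  have rcont: "continuous_on {0..<R} \<rho>0"
  proof (rule DERIV_continuous_on[where D="deriv \<rho>0"])
    fix x assume "x \<in> {0..<R}"
    thus "(\<rho>0 has_real_derivative deriv \<rho>0 x) (at x within {0..<R})"
      using sm unfolding smooth_on_def by (metis (no_types) funpow_0 funpow_Suc_right o_apply comp_id id_apply One_nat_def)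
  qed
  define \<eta> where "\<eta> = R/2"
  have \<eta>0: "\<eta> > 0" "\<eta> < R" unfolding \<eta>_def using R0 by auto
  obtain a where a: "\<forall>x\<in>\<rho>0 ` {0..\<eta>}. \<bar>x\<bar> \<le> a"
    using compact_imp_bounded[OF compact_continuous_image[OF continuous_on_subset[OF rcont]]] \<eta>0
    unfolding bounded_real by (metis atLeastAtMost_subseteq_atLeastLessThan_iff compact_Icc order_refl)
  define M where "M = max a 1"
  have M0: "M > 0" unfolding M_def by simp
  have Mb: "\<rho>0 y \<le> M" "0 < \<rho>0 y" if "0 \<le> y" "y \<le> \<eta>" for y
    using a that pos \<eta>0 unfolding M_def by force+
  have dphi: "(\<phi> has_real_derivative deriv \<phi> y) (at y)" if "0<y" "y<R" for y
    using smooth_open_deriv[OF assms(9), of y 0] that by simp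
  have ddphi: "(deriv \<phi> has_real_derivative deriv (deriv \<phi>) y) (at y)" if "0<y" "y<R" for y
    using smooth_open_deriv[OF assms(9), of y 1] that by simp
  have contd: "continuous_on {0<..<R} (deriv \<phi>)"
    using ddphi by (intro DERIV_continuous_on[where D="deriv (deriv \<phi>)"]) (auto intro: has_field_derivative_at_within)
  have int: "(\<lambda>y. ((deriv \<phi> y)\<^sup>2 + (\<phi> y)\<^sup>2)/y\<^sup>2) integrable_on {0<..<R}"
    using assms(8) unfolding in_H12_def by (auto intro: set_borel_integral_eq_integral(1))
  obtain B where B0: "B > 0" and Bb: "\<And>z. 0<z \<Longrightarrow> z<R \<Longrightarrow> \<bar>\<phi> z\<bar> \<le> B*z* sqrt z"
    using phi_bound1[OF R0 dphi contd int] by auto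
  have dw: "(w has_real_derivative deriv w y) (at y)" if "0<y" "y<R" for y
    unfolding w_def using wderiv[OF dP[OF that] ddphi[OF that]] that by simp
  define D where "D = 16*pi*M\<^sup>2 + \<bar>\<mu>\<bar>*M"
  define E where "E = D*B"
  have E0: "E \<ge> 0" unfolding E_def D_def using B0 M0 by auto
  have dwb: "\<bar>deriv w z\<bar> \<le> E / sqrt z" if z: "0<z" "z\<le>\<eta>" for z
  proof -
    have zR: "z < R" using z \<eta>0 by simp
    define J where "J = integral {0..z} (\<lambda>y. \<rho>0 y * y\<^sup>2)"
    have cJ: "continuous_on {0..z} (\<lambda>y. \<rho>0 y * y\<^sup>2)"
      using zR by (intro continuous_intros continuous_on_subset[OF rcont]) auto
    have J0: "J \<ge> 0" unfolding J_def using Mb z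
      by (intro integral_nonneg integrable_continuous_real cJ) (smt (verit) atLeastAtMost_iff mult_nonneg_nonneg zero_le_power2 order_trans)
    have "J \<le> integral {0..z} (\<lambda>y. M * z\<^sup>2)" unfolding J_def
    proof (rule integral_le)
      show "(\<lambda>y. \<rho>0 y * y\<^sup>2) integrable_on {0..z}" by (rule integrable_continuous_real[OF cJ])
      show "(\<lambda>y. M * z\<^sup>2) integrable_on {0..z}" by (rule integrable_continuous_real[OF continuous_on_const])
      fix y assume y: "y \<in> {0..z}"
      hence "\<rho>0 y \<le> M" "0 < \<rho>0 y" using Mb z by auto
      moreover have "y\<^sup>2 \<le> z\<^sup>2" using y by (auto intro: power_mono)
      ultimately show "\<rho>0 y * y\<^sup>2 \<le> M * z\<^sup>2" by (simp add: mult_mono)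
    qed
    also have "\<dots> = M * z^3" using z by (simp add: power2_eq_square power3_eq_cube)
    finally have JM: "J \<le> M*z^3" .
    have r: "\<rho>0 z \<le> M" "0 < \<rho>0 z" using Mb z by auto
    have "\<bar>deriv P z\<bar> = 4*pi*\<rho>0 z/z\<^sup>2 * J" using dPe[OF z(1) zR] J0 r z unfolding J_def
      by (simp add: abs_mult)
    also have "\<dots> \<le> 4*pi*M/z\<^sup>2 * (M*z^3)"
      using r J0 JM z by (intro mult_mono divide_right_mono) auto
    also have "\<dots> = 4*pi*M\<^sup>2*z" using z by (simp add: power2_eq_square power3_eq_cube)
    finally have dPb: "\<bar>deriv P z\<bar> \<le> 4*pi*M\<^sup>2*z" .
    have eq: "deriv w z = (4 * deriv P z / z^3 - \<mu> * \<rho>0 z / z\<^sup>2) * \<phi> z"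
      using ode[OF z(1) zR] by (simp add: algebra_simps)
    have "\<bar>4 * deriv P z / z^3 - \<mu> * \<rho>0 z / z\<^sup>2\<bar> \<le> 4*\<bar>deriv P z\<bar>/z^3 + \<bar>\<mu>\<bar>*\<rho>0 z/z\<^sup>2"
    proof -
      have "\<bar>4 * deriv P z / z^3\<bar> = 4*\<bar>deriv P z\<bar>/z^3" using z by (simp add: abs_mult)
      moreover have "\<bar>\<mu> * \<rho>0 z / z\<^sup>2\<bar> = \<bar>\<mu>\<bar>*\<rho>0 z/z\<^sup>2" using z r by (simp add: abs_mult)
      ultimately show ?thesis using abs_triangle_ineq4[of "4 * deriv P z / z^3" "\<mu> * \<rho>0 z / z\<^sup>2"] by linarith
    qed
    also have "\<dots> \<le> 4*(4*pi*M\<^sup>2*z)/z^3 + \<bar>\<mu>\<bar>*M/z\<^sup>2"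
      using dPb r z by (intro add_mono divide_right_mono mult_left_mono) auto
    also have "\<dots> = D / z\<^sup>2" unfolding D_def using z by (simp add: field_simps power2_eq_square power3_eq_cube)
    finally have cb: "\<bar>4 * deriv P z / z^3 - \<mu> * \<rho>0 z / z\<^sup>2\<bar> \<le> D / z\<^sup>2" .
    have "\<bar>deriv w z\<bar> \<le> D / z\<^sup>2 * (B*z* sqrt z)"
      unfolding eq abs_mult using cb Bb[OF z(1) zR] by (intro mult_mono) auto
    also have "\<dots> = E / sqrt z"
    proof -
      have s: "sqrt z * sqrt z = z" using z by simp
      have "sqrt z > 0" using z by simp
      thus ?thesis unfolding E_def using z s by (simp add: field_simps power2_eq_square)
    qed
    finally show ?thesis .
  qed
  define Wb where "Wb = \<bar>w \<eta>\<bar> + 2*E* sqrt \<eta>"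
  have wb: "\<bar>w z\<bar> \<le> Wb" if z: "0<z" "z\<le>\<eta>" for z
  proof -
    have "\<bar>w \<eta> - w z\<bar> \<le> 2*E* sqrt \<eta> - 2*E* sqrt z"
    proof (rule deriv_abs_bound[OF z(2)])
      fix y assume y: "z \<le> y" "y \<le> \<eta>"
      hence y0: "0 < y" "y < R" using z \<eta>0 by auto
      show "(w has_real_derivative deriv w y) (at y)" by (rule dw[OF y0])
      show "((\<lambda>y. 2*E* sqrt y) has_real_derivative E / sqrt y) (at y)"
        using y0 by (auto intro!: derivative_eq_intros simp: field_simps)
      show "\<bar>deriv w y\<bar> \<le> E / sqrt y" using dwb y0 y by auto
    qed
    moreover have "2*E* sqrt z \<ge> 0" using E0 z by simp
    ultimately show ?thesis unfolding Wb_def by linarith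
  qed
  define c where "c = Wb/c0 + 1"
  have Wb0: "Wb \<ge> 0" unfolding Wb_def using E0 \<eta>0 by simp
  have c0': "c > 0" unfolding c_def using Wb0 c00 by (simp add: add_nonneg_pos)
  have dphib: "\<bar>deriv \<phi> z\<bar> \<le> c * z\<^sup>2" if z: "0<z" "z\<le>\<eta>" for z
  proof -
    have Az: "A z > 0" using Ap[of z] c00 by linarith
    have "w z = A z * deriv \<phi> z / z\<^sup>2" unfolding w_def A_def by simp
    hence "deriv \<phi> z = w z * z\<^sup>2 / A z" using Az z by (simp add: field_simps)
    hence "\<bar>deriv \<phi> z\<bar> = \<bar>w z\<bar> * z\<^sup>2 / A z" using Az by (simp add: abs_mult)
    also have "\<dots> \<le> Wb * z\<^sup>2 / c0"
      using wb[OF z] Az Ap[of z] c00 Wb0 by (intro frac_le mult_right_mono) auto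
    also have "\<dots> \<le> c * z\<^sup>2" unfolding c_def by (simp add: field_simps)
    finally show ?thesis .
  qed
  have phib: "\<bar>\<phi> z\<bar> \<le> c * z^3" if z: "0<z" "z\<le>\<eta>" for z
  proof (rule field_le_epsilon)
    fix e :: real assume e: "e > 0"
    define x where "x = min (z/2) (min 1 (e/(B+1)))"
    have x0: "0 < x" "x \<le> z" "x \<le> 1" "x \<le> e/(B+1)" unfolding x_def using z e B0 by auto
    have "\<bar>\<phi> z - \<phi> x\<bar> \<le> c*z\<^sup>2*z - c*z\<^sup>2*x"
    proof (rule deriv_abs_bound[OF x0(2)])
      fix y assume y: "x \<le> y" "y \<le> z"
      hence y0: "0 < y" "y < R" "y \<le> \<eta>" using z x0 \<eta>0 by auto
      show "(\<phi> has_real_derivative deriv \<phi> y) (at y)" by (rule dphi[OF y0(1,2)])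
      show "((\<lambda>y. c*z\<^sup>2*y) has_real_derivative c*z\<^sup>2) (at y)"
        by (auto intro!: derivative_eq_intros)
      have "c*y\<^sup>2 \<le> c*z\<^sup>2" using c0' y y0 by (auto intro!: mult_left_mono power_mono)
      thus "\<bar>deriv \<phi> y\<bar> \<le> c*z\<^sup>2" using dphib[OF y0(1,3)] by linarith
    qed
    moreover have "c*z\<^sup>2*x \<ge> 0" using c0' x0 by simp
    moreover have "\<bar>\<phi> x\<bar> \<le> e"
    proof -
      have "\<bar>\<phi> x\<bar> \<le> B*x* sqrt x" using Bb x0 z \<eta>0 by auto
      also have "\<dots> \<le> B*x" using B0 x0 by (simp add: mult_left_le real_sqrt_le_1_iff)
      also have "\<dots> \<le> B*(e/(B+1))" using B0 x0 by (intro mult_left_mono) auto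
      also have "\<dots> \<le> e" using B0 e by (simp add: field_simps)
      finally show ?thesis .
    qed
    ultimately show "\<bar>\<phi> z\<bar> \<le> c * z^3 + e" by (simp add: power2_eq_square power3_eq_cube)
  qed
  show ?thesis
    using c0' \<eta>0 phib dphib by (intro exI[of _ c] conjI exI[of _ \<eta>]) auto
qed


end
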